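(* Let $\rho$ be a single-qubit state with spectral decomposition $\rho=\lambda_0|\psi_0\rangle\langle\psi_0|+\lambda_1|\psi_1\rangle\langle\psi_1|$, $\lambda_0\neq\lambda_1$, and let $U(\bm\varphi)$ be any smooth family of $2\times2$ unitaries depending on two real parameters $\bm\varphi=(\varphi_1,\varphi_2)$. Let $\rho_{\bm\varphi}=U(\bm\varphi)\rho U(\bm\varphi)^\dagger$ and $|\psi_0(\bm\varphi)\rangle=U(\bm\varphi)|\psi_0\rangle$. Then the Uhlmann matrices satisfy $$D_{ij}(\rho_{\bm\varphi})=\pm\big(2\,\mathrm{Tr}(\rho^2)-1\big)^{3/2}\,D_{ij}\big(|\psi_0(\bm\varphi)\rangle\langle\psi_0(\bm\varphi)|\big)=\pm 4\big(2\,\mathrm{Tr}(\rho^2)-1\big)^{3/2}\,\mathrm{Im}\,\langle\psi_0|\mathcal{H}_i\mathcal{H}_j|\psi_0\rangle,$$ with the sign $+$ if $\lambda_0>\lambda_1$ and $-$ if $\lambda_0<\lambda_1$.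
   Context: Effective Hamiltonians: $\mathcal{H}_j:=i\,(\partial_{\varphi_j}U^\dagger(\bm\varphi))U(\bm\varphi)$. For a family of states $\rho_{\bm\varphi}$, the symmetric logarithmic derivatives $L_{\varphi_j}$ are Hermitian operators with $\partial_{\varphi_j}\rho_{\bm\varphi}=\tfrac12(L_{\varphi_j}\rho_{\bm\varphi}+\rho_{\bm\varphi}L_{\varphi_j})$, and the Uhlmann matrix is $D_{ij}(\rho_{\bm\varphi})=\mathrm{Im}\,\mathrm{Tr}(\rho_{\bm\varphi}L_{\varphi_i}L_{\varphi_j})=\frac{1}{2i}\mathrm{Tr}(\rho_{\bm\varphi}[L_{\varphi_i},L_{\varphi_j}])$ (independent of the non-unique part of $L$ outside the support). *)

theory Defs
  imports "HOL-Analysis.Analysis"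
begin

type_synonym qvec = "complex ^ 2"
type_synonym qmat = "complex ^ 2 ^ 2"

definition adj :: "qmat \<Rightarrow> qmat" where
  "adj A = (\<chi> i j. cnj (A $ j $ i))"

definition mtrace :: "qmat \<Rightarrow> complex" where
  "mtrace A = (\<Sum>i\<in>UNIV. A $ i $ i)"

definition cinner :: "qvec \<Rightarrow> qvec \<Rightarrow> complex" where
  "cinner x y = (\<Sum>i\<in>UNIV. cnj (x $ i) * y $ i)"

definition ketbra :: "qvec \<Rightarrow> qvec \<Rightarrow> qmat" where
  "ketbra x y = (\<chi> a b. x $ a * cnj (y $ b))"

definition hermitian :: "qmat \<Rightarrow> bool" where
  "hermitian A \<longleftrightarrow> adj A = A"

definition unitary :: "qmat \<Rightarrow> bool" where
  "unitary A \<longleftrightarrow> adj A ** A = mat 1 \<and> A ** adj A = mat 1"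

definition density_matrix :: "qmat \<Rightarrow> bool" where
  "density_matrix \<rho> \<longleftrightarrow> hermitian \<rho> \<and> (\<forall>v. 0 \<le> Re (cinner v (\<rho> *v v))) \<and> mtrace \<rho> = 1"

definition partial :: "2 \<Rightarrow> (real ^ 2 \<Rightarrow> 'b::real_normed_vector) \<Rightarrow> real ^ 2 \<Rightarrow> 'b" where
  "partial j f x = vector_derivative (\<lambda>t. f (x + t *\<^sub>R axis j 1)) (at 0)"

fun Ck :: "nat \<Rightarrow> (real ^ 2 \<Rightarrow> 'b::real_normed_vector) \<Rightarrow> bool" where
  "Ck 0 f = continuous_on UNIV f"
| "Ck (Suc k) f = ((\<forall>x. f differentiable (at x)) \<and> continuous_on UNIV f
                   \<and> (\<forall>j. Ck k (partial j f)))"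

definition smooth :: "(real ^ 2 \<Rightarrow> 'b::real_normed_vector) \<Rightarrow> bool" where
  "smooth f \<longleftrightarrow> (\<forall>k. Ck k f)"

definition is_SLD :: "(real ^ 2 \<Rightarrow> qmat) \<Rightarrow> real ^ 2 \<Rightarrow> 2 \<Rightarrow> qmat \<Rightarrow> bool" where
  "is_SLD fam x j L \<longleftrightarrow> hermitian L \<and>
     partial j fam x = (1/2::real) *\<^sub>R (L ** fam x + fam x ** L)"

definition SLD :: "(real ^ 2 \<Rightarrow> qmat) \<Rightarrow> real ^ 2 \<Rightarrow> 2 \<Rightarrow> qmat" where
  "SLD fam x j = (SOME L. is_SLD fam x j L)"

definition uhlmann :: "(real ^ 2 \<Rightarrow> qmat) \<Rightarrow> real ^ 2 \<Rightarrow> 2 \<Rightarrow> 2 \<Rightarrow> real" where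
  "uhlmann fam x i j = Im (mtrace (fam x ** SLD fam x i ** SLD fam x j))"

definition eff_ham :: "(real ^ 2 \<Rightarrow> qmat) \<Rightarrow> real ^ 2 \<Rightarrow> 2 \<Rightarrow> qmat" where
  "eff_ham U x j = (let M = partial j (\<lambda>y. adj (U y)) x ** U x in (\<chi> a b. \<i> * M $ a $ b))"

end

theory Submission
  imports Defs
begin


lemma sum2: "(\<Sum>i\<in>(UNIV::2 set). f i) = f 1 + f 2"
  by (rule sum_2)

definition dg :: "real \<Rightarrow> real \<Rightarrow> qmat" where
  "dg a b = (\<chi> i j. if i = j then (if i = 1 then complex_of_real a else complex_of_real b) else 0)"

lemma scaleR_entry[simp]: "((r::real) *\<^sub>R (A::qmat))$i$j = complex_of_real r * A$i$j"
  by (simp only: vector_scaleR_component) (simp add: scaleR_conv_of_real)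

lemma adj_mult: "adj (A ** B) = adj B ** adj A"
  by (simp add: vec_eq_iff adj_def matrix_matrix_mult_def sum2 mult.commute)
lemma adj_adj[simp]: "adj (adj A) = A"
  by (simp add: vec_eq_iff adj_def)
lemma adj_add: "adj (A + B) = adj A + adj B"
  by (simp add: vec_eq_iff adj_def)
lemma adj_scaleR: "adj (r *\<^sub>R A) = r *\<^sub>R adj A"
  by (simp add: vec_eq_iff adj_def)
lemma adj_minus: "adj (- A) = - adj A"
  by (simp add: vec_eq_iff adj_def)
lemma adj_one[simp]: "adj (mat 1) = mat 1"
  by (simp add: vec_eq_iff adj_def mat_def)
lemma adj_dg[simp]: "adj (dg a b) = dg a b"
  by (simp add: vec_eq_iff adj_def dg_def)
lemma mtrace_comm: "mtrace (A ** B) = mtrace (B ** A)"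
  by (simp add: mtrace_def matrix_matrix_mult_def sum2 mult.commute)

lemma core:
  fixes Mi Mj Li Lj :: qmat and l0 l1 :: real
  assumes l: "l0 + l1 = 1"
    and Mi: "adj Mi = - Mi" and Mj: "adj Mj = - Mj"
    and Li: "hermitian Li" and Lj: "hermitian Lj"
    and Ei: "Mi ** dg l0 l1 + dg l0 l1 ** adj Mi = (1/2::real) *\<^sub>R (Li ** dg l0 l1 + dg l0 l1 ** Li)"
    and Ej: "Mj ** dg l0 l1 + dg l0 l1 ** adj Mj = (1/2::real) *\<^sub>R (Lj ** dg l0 l1 + dg l0 l1 ** Lj)"
  shows "Im (mtrace (dg l0 l1 ** Li ** Lj)) = 4 * (l0 - l1)^3 * Im (Mi$1$2 * cnj (Mj$1$2))"
proof -
  have ai: "\<And>a b. cnj (Li$b$a) = Li$a$b" using Li unfolding hermitian_def vec_eq_iff adj_def by simp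
  have hi: "Li$2$1 = cnj (Li$1$2)" "Im (Li$1$1) = 0" "Im (Li$2$2) = 0"
    using ai[of 1 2] ai[of 1 1] ai[of 2 2] by (auto simp: complex_eq_iff)
  have aj: "\<And>a b. cnj (Lj$b$a) = Lj$a$b" using Lj unfolding hermitian_def vec_eq_iff adj_def by simp
  have hj: "Lj$2$1 = cnj (Lj$1$2)" "Im (Lj$1$1) = 0" "Im (Lj$2$2) = 0"
    using aj[of 1 2] aj[of 1 1] aj[of 2 2] by (auto simp: complex_eq_iff)
  have mi: "cnj (Mi$2$1) = - Mi$1$2" using Mi unfolding vec_eq_iff adj_def
    by (auto dest: spec[of _ 1] spec[of _ 2])
  have mj: "cnj (Mj$2$1) = - Mj$1$2" using Mj unfolding vec_eq_iff adj_def
    by (auto dest: spec[of _ 1] spec[of _ 2])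
  have "(Mi ** dg l0 l1 + dg l0 l1 ** adj Mi)$1$2 = ((1/2::real) *\<^sub>R (Li ** dg l0 l1 + dg l0 l1 ** Li))$1$2"
    using Ei by simp
  then have "Mi$1$2 * l1 + l0 * cnj (Mi$2$1) = (Li$1$2 * l1 + l0 * Li$1$2) / 2"
    by (simp add: matrix_matrix_mult_def sum2 dg_def adj_def del: vector_scaleR_component)
  then have xi: "Li$1$2 = - 2 * (l0 - l1) * Mi$1$2"
    using l mi by (simp add: algebra_simps) (metis (no_types) add.commute distrib_left mult.commute mult.left_neutral of_real_add of_real_1 l)
  have "(Mj ** dg l0 l1 + dg l0 l1 ** adj Mj)$1$2 = ((1/2::real) *\<^sub>R (Lj ** dg l0 l1 + dg l0 l1 ** Lj))$1$2"
    using Ej by simp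
  then have "Mj$1$2 * l1 + l0 * cnj (Mj$2$1) = (Lj$1$2 * l1 + l0 * Lj$1$2) / 2"
    by (simp add: matrix_matrix_mult_def sum2 dg_def adj_def del: vector_scaleR_component)
  then have xj: "Lj$1$2 = - 2 * (l0 - l1) * Mj$1$2"
    using l mj by (simp add: algebra_simps) (metis (no_types) add.commute distrib_left mult.commute mult.left_neutral of_real_add of_real_1 l)
  have "mtrace (dg l0 l1 ** Li ** Lj) = l0 * (Li$1$1 * Lj$1$1 + Li$1$2 * Lj$2$1) + l1 * (Li$2$1 * Lj$1$2 + Li$2$2 * Lj$2$2)"
    by (simp add: mtrace_def matrix_matrix_mult_def sum2 dg_def algebra_simps)
  also have "\<dots> = l0 * (Li$1$1 * Lj$1$1 + Li$1$2 * cnj (Lj$1$2)) + l1 * (cnj (Li$1$2) * Lj$1$2 + Li$2$2 * Lj$2$2)"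
    using hi hj by simp
  also have "\<dots> = l0 * (Li$1$1 * Lj$1$1) + l1 * (Li$2$2 * Lj$2$2)
       + complex_of_real (4 * (l0 - l1)^2) * (l0 * (Mi$1$2 * cnj (Mj$1$2)) + l1 * (cnj (Mi$1$2) * Mj$1$2))"
    unfolding xi xj by (simp add: algebra_simps power2_eq_square)
  finally have T: "mtrace (dg l0 l1 ** Li ** Lj) = \<dots>" .
  have r1: "Im (complex_of_real l0 * (Li$1$1 * Lj$1$1)) = 0" "Im (complex_of_real l1 * (Li$2$2 * Lj$2$2)) = 0"
    using hi hj by simp_all
  have r2: "Im (cnj (Mi$1$2) * Mj$1$2) = - Im (Mi$1$2 * cnj (Mj$1$2))" by simp
  have "Im (mtrace (dg l0 l1 ** Li ** Lj)) = 4 * (l0 - l1)^2 * (l0 * Im (Mi$1$2 * cnj (Mj$1$2)) + l1 * Im (cnj (Mi$1$2) * Mj$1$2))"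
    unfolding T plus_complex.sel r1 by simp
  also have "\<dots> = 4 * (l0 - l1)^3 * Im (Mi$1$2 * cnj (Mj$1$2))"
    unfolding r2 by (simp add: power3_eq_cube power2_eq_square algebra_simps)
  finally show ?thesis .
qed


lemma forall2: "(\<forall>i::2. P i) \<longleftrightarrow> P 1 \<and> P 2"
  by (metis exhaust_2)

lemma core_exists:
  fixes M :: qmat and l0 l1 :: real
  assumes l: "l0 + l1 = 1" and M: "adj M = - M"
  shows "\<exists>L. hermitian L \<and> M ** dg l0 l1 + dg l0 l1 ** adj M = (1/2::real) *\<^sub>R (L ** dg l0 l1 + dg l0 l1 ** L)"
proof -
  have m: "\<And>a b. cnj (M$b$a) = - M$a$b" using M unfolding vec_eq_iff adj_def by simp
  have m11: "cnj (M$1$1) = - M$1$1" and m22: "cnj (M$2$2) = - M$2$2" and m21: "cnj (M$2$1) = - M$1$2"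
    using m by auto
  have m21': "M$2$1 = - cnj (M$1$2)" using m[of 2 1] by (metis complex_cnj_cnj complex_cnj_minus)
  have l1: "l1 = 1 - l0" using l by simp
  define L :: qmat where "L = (\<chi> a b. if a = b then 0 else if a = 1 then complex_of_real (-2*(l0-l1)) * M$1$2
      else complex_of_real (-2*(l0-l1)) * cnj (M$1$2))"
  have "hermitian L" unfolding hermitian_def L_def adj_def vec_eq_iff forall2 by simp
  moreover have "M ** dg l0 l1 + dg l0 l1 ** adj M = (1/2::real) *\<^sub>R (L ** dg l0 l1 + dg l0 l1 ** L)"
    unfolding vec_eq_iff forall2 using l
    apply (simp add: L_def matrix_matrix_mult_def sum2 dg_def adj_def m11 m22 m21 del: vector_scaleR_component)
    apply (intro conjI)
    apply (simp_all add: algebra_simps m21' l1)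
    done
  ultimately show ?thesis by blast
qed


lemma bb_mult: "bounded_bilinear ((**) :: qmat \<Rightarrow> qmat \<Rightarrow> qmat)"
  unfolding bilinear_conv_bounded_bilinear[symmetric] bilinear_def
  by (auto intro!: linearI simp: vec_eq_iff matrix_matrix_mult_def sum2 algebra_simps)

lemma add_rd: "((A::qmat) + B) ** (C::qmat) = A ** C + B ** C"
  by (rule bounded_bilinear.add_left[OF bb_mult])
lemma sR_left: "((r::real) *\<^sub>R (A::qmat)) ** (B::qmat) = r *\<^sub>R (A ** B)"
  by (rule bounded_bilinear.scaleR_left[OF bb_mult])
lemma sR_right: "(A::qmat) ** ((r::real) *\<^sub>R (B::qmat)) = r *\<^sub>R (A ** B)"
  by (rule bounded_bilinear.scaleR_right[OF bb_mult])

lemmas mstuff = matrix_mul_assoc matrix_add_ldistrib add_rd sR_left sR_right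
   adj_mult adj_add adj_scaleR adj_minus

lemma cancel1: "adj T ** T = mat 1 \<Longrightarrow> (X::qmat) ** adj T ** T = X"
  by (simp add: matrix_mul_assoc[symmetric])
lemma cancel2: "T ** adj T = mat 1 \<Longrightarrow> (X::qmat) ** T ** adj T = X"
  by (simp add: matrix_mul_assoc[symmetric])

lemma uhl_value:
  fixes fam :: "real^2 \<Rightarrow> qmat" and T :: qmat and M :: "2 \<Rightarrow> qmat"
  assumes l: "l0 + l1 = 1" and u1: "adj T ** T = mat 1" and u2: "T ** adj T = mat 1"
    and F: "fam x = T ** dg l0 l1 ** adj T"
    and dF: "\<And>k. partial k fam x = T ** (M k ** dg l0 l1 + dg l0 l1 ** adj (M k)) ** adj T"
    and M: "\<And>k. adj (M k) = - M k"
  shows "uhlmann fam x i j = 4 * (l0 - l1)^3 * Im (M i $1$2 * cnj (M j $1$2))"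
proof -
  let ?D = "dg l0 l1"
  have ex: "\<exists>L. is_SLD fam x k L" for k
  proof -
    obtain L where L: "hermitian L" "M k ** ?D + ?D ** adj (M k) = (1/2::real) *\<^sub>R (L ** ?D + ?D ** L)"
      using core_exists[OF l M] by blast
    have "hermitian (T ** L ** adj T)" using L(1) unfolding hermitian_def by (simp add: adj_mult matrix_mul_assoc)
    moreover have "partial k fam x = (1/2::real) *\<^sub>R ((T ** L ** adj T) ** fam x + fam x ** (T ** L ** adj T))"
      unfolding dF L(2) F by (simp add: mstuff cancel1[OF u1] cancel2[OF u2] u1 u2)
    ultimately show ?thesis unfolding is_SLD_def by blast
  qed
  have tr: "hermitian (adj T ** L ** T) \<and> M k ** ?D + ?D ** adj (M k) = (1/2::real) *\<^sub>R ((adj T ** L ** T) ** ?D + ?D ** (adj T ** L ** T))"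
    if "is_SLD fam x k L" for k L
  proof -
    have h: "hermitian L" and e: "partial k fam x = (1/2::real) *\<^sub>R (L ** fam x + fam x ** L)"
      using that unfolding is_SLD_def by auto
    have "hermitian (adj T ** L ** T)" using h unfolding hermitian_def by (simp add: adj_mult matrix_mul_assoc)
    moreover have "adj T ** partial k fam x ** T = M k ** ?D + ?D ** adj (M k)"
      unfolding dF by (simp add: mstuff cancel1[OF u1] cancel2[OF u2] u1 u2)
    moreover have "adj T ** partial k fam x ** T = (1/2::real) *\<^sub>R ((adj T ** L ** T) ** ?D + ?D ** (adj T ** L ** T))"
      unfolding e F by (simp add: mstuff cancel1[OF u1] cancel2[OF u2] u1 u2)
    ultimately show ?thesis by simp
  qed
  let ?Li = "SLD fam x i" and ?Lj = "SLD fam x j"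
  have si: "is_SLD fam x i ?Li" unfolding SLD_def by (rule someI_ex[OF ex])
  have sj: "is_SLD fam x j ?Lj" unfolding SLD_def by (rule someI_ex[OF ex])
  have "mtrace (fam x ** ?Li ** ?Lj) = mtrace (T ** (?D ** adj T ** ?Li ** ?Lj))"
    unfolding F by (simp add: matrix_mul_assoc)
  also have "\<dots> = mtrace (?D ** adj T ** ?Li ** ?Lj ** T)"
    by (rule mtrace_comm)
  also have "\<dots> = mtrace (?D ** (adj T ** ?Li ** T) ** (adj T ** ?Lj ** T))"
    by (simp add: matrix_mul_assoc cancel2[OF u2])
  finally have "uhlmann fam x i j = Im (mtrace (?D ** (adj T ** ?Li ** T) ** (adj T ** ?Lj ** T)))"
    unfolding uhlmann_def by simp
  also have "\<dots> = 4 * (l0 - l1)^3 * Im (M i $1$2 * cnj (M j $1$2))"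
    using tr[OF si] tr[OF sj] by (intro core[OF l M M]) auto
  finally show ?thesis .
qed


lemma bl_adj: "bounded_linear adj"
  unfolding linear_conv_bounded_linear[symmetric]
  by (auto intro!: linearI simp: vec_eq_iff adj_def)

lemma partial_has:
  fixes U :: "real^2 \<Rightarrow> 'b::real_normed_vector"
  assumes "U differentiable (at x)"
  shows "((\<lambda>t. U (x + t *\<^sub>R axis j 1)) has_vector_derivative partial j U x) (at 0)"
proof -
  have "(\<lambda>t. x + t *\<^sub>R axis j (1::real)) differentiable (at 0)"
    by (intro derivative_intros differentiableI_vector) (auto intro!: derivative_eq_intros)
  moreover have "U differentiable (at ((\<lambda>t. x + t *\<^sub>R axis j (1::real)) 0))" using assms by simp
  ultimately have "(U \<circ> (\<lambda>t. x + t *\<^sub>R axis j (1::real))) differentiable (at 0)"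
    by (rule differentiable_chain_at)
  then show ?thesis unfolding partial_def vector_derivative_works[symmetric] by (simp add: o_def)
qed


lemma smooth_diff: "smooth U \<Longrightarrow> U differentiable (at x)"
  unfolding smooth_def by (metis Ck.simps(2))

lemma partial_adj:
  fixes U :: "real^2 \<Rightarrow> qmat"
  assumes "U differentiable (at x)"
  shows "partial j (\<lambda>y. adj (U y)) x = adj (partial j U x)"
proof -
  have "((\<lambda>t. adj (U (x + t *\<^sub>R axis j 1))) has_vector_derivative adj (partial j U x)) (at 0)"
    by (rule bounded_linear.has_vector_derivative[OF bl_adj partial_has[OF assms]])
  then show ?thesis unfolding partial_def by (rule vector_derivative_at)
qed

lemma partial_sandwich:
  fixes U :: "real^2 \<Rightarrow> qmat"
  assumes "U differentiable (at x)"
  shows "partial j (\<lambda>y. U y ** A ** adj (U y)) x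
       = partial j U x ** A ** adj (U x) + U x ** A ** adj (partial j U x)"
proof -
  let ?g = "\<lambda>t. U (x + t *\<^sub>R axis j 1)"
  have g: "(?g has_vector_derivative partial j U x) (at 0)" by (rule partial_has[OF assms])
  have ga: "((\<lambda>t. adj (?g t)) has_vector_derivative adj (partial j U x)) (at 0)"
    by (rule bounded_linear.has_vector_derivative[OF bl_adj g])
  have g1: "((\<lambda>t. ?g t ** A) has_vector_derivative (?g 0 ** 0 + partial j U x ** A)) (at 0)"
    by (rule bounded_bilinear.has_vector_derivative[OF bb_mult g has_vector_derivative_const])
  have "((\<lambda>t. ?g t ** A ** adj (?g t)) has_vector_derivative
      ((?g 0 ** A) ** adj (partial j U x) + (?g 0 ** 0 + partial j U x ** A) ** adj (?g 0))) (at 0)"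
    by (rule bounded_bilinear.has_vector_derivative[OF bb_mult g1 ga])
  then have "((\<lambda>t. ?g t ** A ** adj (?g t)) has_vector_derivative
      (partial j U x ** A ** adj (U x) + U x ** A ** adj (partial j U x))) (at 0)"
    by (simp add: add.commute)
  then show ?thesis unfolding partial_def by (rule vector_derivative_at)
qed



lemma minus_l: "(- (A::qmat)) ** (B::qmat) = - (A ** B)"
  by (rule bounded_bilinear.minus_left[OF bb_mult])
lemma minus_r: "(A::qmat) ** (- (B::qmat)) = - (A ** B)"
  by (rule bounded_bilinear.minus_right[OF bb_mult])

definition w0 :: "qvec \<Rightarrow> qvec \<Rightarrow> qmat" where
  "w0 p q = (\<chi> a b. if b = 1 then p$a else q$a)"

lemma w0_unit:
  assumes "cinner p p = 1" "cinner q q = 1" "cinner p q = 0"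
  shows "adj (w0 p q) ** w0 p q = mat 1"
proof -
  have "cinner q p = cnj (cinner p q)" by (simp add: cinner_def sum2 mult.commute)
  then have "cinner q p = 0" using assms by simp
  then show ?thesis using assms
    unfolding vec_eq_iff forall2
    by (simp add: adj_def w0_def matrix_matrix_mult_def mat_def cinner_def sum2)
qed

lemma rho_eq:
  "l0 *\<^sub>R ketbra p p + l1 *\<^sub>R ketbra q q = w0 p q ** dg l0 l1 ** adj (w0 p q)"
  unfolding vec_eq_iff forall2
  by (simp add: adj_def w0_def matrix_matrix_mult_def dg_def ketbra_def sum2 del: vector_scaleR_component)

lemma ketbra_conj: "ketbra (V *v p) (V *v p) = V ** ketbra p p ** adj V"
  unfolding vec_eq_iff forall2
  by (simp add: adj_def matrix_matrix_mult_def matrix_vector_mult_def ketbra_def sum2 algebra_simps)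

lemma ketbra_w0: "ketbra p p = w0 p q ** dg 1 0 ** adj (w0 p q)"
  unfolding vec_eq_iff forall2
  by (simp add: adj_def w0_def matrix_matrix_mult_def dg_def ketbra_def sum2)

lemma cinner_w0: "cinner p (B *v p) = (adj (w0 p q) ** B ** w0 p q)$1$1"
  by (simp add: adj_def w0_def matrix_matrix_mult_def matrix_vector_mult_def cinner_def sum2 algebra_simps)

lemma trace_dg: "mtrace (dg a b) = complex_of_real (a + b)"
  by (simp add: mtrace_def dg_def sum2)

lemma dg_sq: "dg a b ** dg a b = dg (a*a) (b*b)"
  unfolding vec_eq_iff forall2 by (simp add: dg_def matrix_matrix_mult_def sum2)


lemma const_partial: "partial j (\<lambda>y. c) x = 0"
  unfolding partial_def by simp

theorem mainTheorem5:
  fixes \<rho> :: qmat and psi0 psi1 :: qvec and l0 l1 :: real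
    and U :: "real ^ 2 \<Rightarrow> qmat"
  assumes state: "density_matrix \<rho>"
    and onb: "cinner psi0 psi0 = 1" "cinner psi1 psi1 = 1" "cinner psi0 psi1 = 0"
    and spec: "\<rho> = l0 *\<^sub>R ketbra psi0 psi0 + l1 *\<^sub>R ketbra psi1 psi1"
    and neq: "l0 \<noteq> l1"
    and unit: "\<forall>x. unitary (U x)"
    and sm: "smooth U"
  shows "let \<sigma> = (if l0 > l1 then 1 else -1 :: real);
             c = (2 * Re (mtrace (\<rho> ** \<rho>)) - 1) powr (3/2);
             rhoF = (\<lambda>x. U x ** \<rho> ** adj (U x));
             PF = (\<lambda>x. ketbra (U x *v psi0) (U x *v psi0))
         in \<forall>x i j.
              uhlmann rhoF x i j = \<sigma> * c * uhlmann PF x i j \<and>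
              uhlmann PF x i j = 4 * Im (cinner psi0 ((eff_ham U x i ** eff_ham U x j) *v psi0))"
proof -
  define W where "W = w0 psi0 psi1"
  have w1: "adj W ** W = mat 1" unfolding W_def by (rule w0_unit[OF onb])
  have w2: "W ** adj W = mat 1" using w1 matrix_left_right_inverse by blast
  have rho: "\<rho> = W ** dg l0 l1 ** adj W" unfolding spec W_def by (rule rho_eq)
  have "mtrace \<rho> = mtrace (dg l0 l1 ** (adj W ** W))"
    unfolding rho by (metis mtrace_comm matrix_mul_assoc)
  then have l: "l0 + l1 = 1" using state unfolding density_matrix_def by (simp add: w1 trace_dg del: of_real_add)
  have "mtrace (\<rho> ** \<rho>) = mtrace (W ** (dg l0 l1 ** dg l0 l1 ** adj W))"
    unfolding rho by (simp add: matrix_mul_assoc cancel1[OF w1] w1)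
  also have "\<dots> = mtrace (dg l0 l1 ** dg l0 l1 ** adj W ** W)" by (rule mtrace_comm)
  also have "\<dots> = mtrace (dg l0 l1 ** dg l0 l1)" by (simp add: cancel1[OF w1])
  finally have tr2: "Re (mtrace (\<rho> ** \<rho>)) = l0*l0 + l1*l1" by (simp add: dg_sq trace_dg del: of_real_add)
  have c: "(if l0 > l1 then 1 else -1 :: real) * (2 * Re (mtrace (\<rho> ** \<rho>)) - 1) powr (3/2) = (l0 - l1)^3"
  proof -
    have "2 * Re (mtrace (\<rho> ** \<rho>)) - 1 = \<bar>l0 - l1\<bar> powr 2"
    proof -
      have "\<bar>l0 - l1\<bar> powr 2 = \<bar>l0 - l1\<bar> ^ 2" using neq by (simp add: powr_realpow)
      moreover have sq: "(l0 + l1) * (l0 + l1) = 1" using l by simp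
      ultimately show ?thesis unfolding tr2 by (simp add: power2_eq_square algebra_simps)
    qed
    then have "(2 * Re (mtrace (\<rho> ** \<rho>)) - 1) powr (3/2) = \<bar>l0 - l1\<bar> powr 3"
      by (simp only: powr_powr) simp
    also have "\<dots> = \<bar>l0 - l1\<bar> ^ 3" using neq by (simp add: powr_realpow)
    finally show ?thesis by (auto simp: abs_if power3_eq_cube algebra_simps)
  qed
  show ?thesis unfolding Let_def
  proof (intro allI)
    fix x i j
    define V where "V = U x"
    define D where "D k = partial k U x" for k
    define T where "T = V ** W"
    define M where "M k = adj T ** D k ** W" for k
    have dif: "\<And>y. U differentiable (at y)" using smooth_diff[OF sm] .
    have v1: "adj V ** V = mat 1" and v2: "V ** adj V = mat 1" using unit unfolding V_def unitary_def by auto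
    have t1: "adj T ** T = mat 1" unfolding T_def by (simp add: adj_mult matrix_mul_assoc cancel1[OF v1] w1)
    have t2: "T ** adj T = mat 1" unfolding T_def by (simp add: adj_mult matrix_mul_assoc cancel2[OF w2] v2)
    have dI: "D k ** adj V + V ** adj (D k) = 0" for k
    proof -
      have "(\<lambda>y. U y ** mat 1 ** adj (U y)) = (\<lambda>y. mat 1)" using unit unfolding unitary_def by simp
      then have "partial k (\<lambda>y. U y ** mat 1 ** adj (U y)) x = 0" by (simp add: const_partial)
      then show ?thesis using partial_sandwich[OF dif, of k "mat 1" x] unfolding D_def V_def by simp
    qed
    have aD: "adj (D k) ** V = - (adj V ** D k)" for k
    proof -
      have "adj V ** (D k ** adj V + V ** adj (D k)) ** V = 0" using dI[of k] by simp
      then have "adj V ** D k + adj (D k) ** V = 0"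
        by (simp add: mstuff cancel1[OF v1] v1)
      then show ?thesis by (simp add: eq_neg_iff_add_eq_0 add.commute)
    qed
    have Manti: "adj (M k) = - M k" for k
    proof -
      have "adj (M k) = adj W ** (adj (D k) ** V) ** W" unfolding M_def T_def by (simp add: adj_mult matrix_mul_assoc)
      also have "\<dots> = - M k" unfolding aD M_def T_def by (simp add: minus_l minus_r adj_mult matrix_mul_assoc)
      finally show ?thesis .
    qed
    have dS: "partial k (\<lambda>y. U y ** (W ** dg a b ** adj W) ** adj (U y)) x
        = T ** (M k ** dg a b + dg a b ** adj (M k)) ** adj T" for k a b
      unfolding partial_sandwich[OF dif] D_def[symmetric] V_def[symmetric] M_def T_def
      by (simp add: mstuff adj_mult cancel1[OF v1] cancel2[OF v2] cancel1[OF w1] cancel2[OF w2] v1 v2 w1 w2)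
    have Fx: "V ** (W ** dg a b ** adj W) ** adj V = T ** dg a b ** adj T" for a b
      unfolding T_def by (simp add: adj_mult matrix_mul_assoc)
    let ?X = "Im (M i $1$2 * cnj (M j $1$2))"
    have uR: "uhlmann (\<lambda>x. U x ** \<rho> ** adj (U x)) x i j = 4 * (l0 - l1)^3 * ?X"
      unfolding rho
      by (rule uhl_value[OF l t1 t2 _ dS Manti]) (simp add: Fx[symmetric] V_def)
    have PFe: "(\<lambda>x. ketbra (U x *v psi0) (U x *v psi0)) = (\<lambda>y. U y ** (W ** dg 1 0 ** adj W) ** adj (U y))"
      unfolding W_def ketbra_conj ketbra_w0[symmetric] ..
    have uP: "uhlmann (\<lambda>x. ketbra (U x *v psi0) (U x *v psi0)) x i j = 4 * (1 - 0)^3 * ?X"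
      unfolding PFe
      by (rule uhl_value[OF _ t1 t2 _ dS Manti]) (simp_all add: Fx[symmetric] V_def)
    have eh: "eff_ham U x k = (\<chi> a b. \<i> * (adj (D k) ** V)$a$b)" for k
      unfolding eff_ham_def Let_def partial_adj[OF dif] D_def V_def ..
    have ii: "(\<chi> a b. \<i> * (A::qmat)$a$b) ** (\<chi> a b. \<i> * (B::qmat)$a$b) = - (A ** B)" for A B
      unfolding vec_eq_iff forall2 by (simp add: matrix_matrix_mult_def sum2 algebra_simps)
    have "cinner psi0 ((eff_ham U x i ** eff_ham U x j) *v psi0)
        = (adj W ** (- (adj (D i) ** V ** (adj (D j) ** V))) ** W)$1$1"
      unfolding eh ii W_def by (rule cinner_w0)
    also have "\<dots> = - ((adj W ** (adj (D i) ** V) ** W) ** (adj W ** (adj (D j) ** V) ** W))$1$1"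
      by (simp add: minus_l minus_r matrix_mul_assoc cancel2[OF w2])
    also have "\<dots> = - (M i ** M j)$1$1"
      unfolding aD M_def T_def by (simp add: minus_l minus_r adj_mult matrix_mul_assoc)
    finally have ce: "cinner psi0 ((eff_ham U x i ** eff_ham U x j) *v psi0) = - (M i ** M j)$1$1" .
    have imX: "Im (- (M i ** M j)$1$1) = ?X"
    proof -
      have m: "\<And>k a b. cnj (M k$b$a) = - M k$a$b" using Manti unfolding vec_eq_iff adj_def by simp
      have "Re (M k$1$1) = 0" for k using m[of k 1 1] by (simp add: complex_eq_iff)
      moreover have "M j$2$1 = - cnj (M j$1$2)" using m[of j 2 1] by (metis complex_cnj_cnj complex_cnj_minus)
      ultimately show ?thesis by (simp add: matrix_matrix_mult_def sum2)
    qed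
    show "uhlmann (\<lambda>x. U x ** \<rho> ** adj (U x)) x i j =
          (if l0 > l1 then 1 else -1 :: real) * (2 * Re (mtrace (\<rho> ** \<rho>)) - 1) powr (3/2) *
          uhlmann (\<lambda>x. ketbra (U x *v psi0) (U x *v psi0)) x i j \<and>
          uhlmann (\<lambda>x. ketbra (U x *v psi0) (U x *v psi0)) x i j =
          4 * Im (cinner psi0 ((eff_ham U x i ** eff_ham U x j) *v psi0))"
      unfolding c uR uP ce imX by simp
  qed
qed


end
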